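(* Let $G=(V,E,H)$ be a HEDG such that every strongly connected component $S$ of $G$ lies completely in one district of the induced sub-HEDG $\mathrm{Anc}^G(S)$. Then every pseudo-topological order for $G$ is a perfect elimination order for $G$ (and thus a quasi-topological order).
   Context: HEDG $G=(V,E,H)$: $V$ finite, $E\subseteq V\times V$ (self-loops allowed), $H$ a simplicial complex on $V$ (contains singletons, closed under subsets); $v\leftrightarrow w$ for distinct $v,w$ with $\{v,w\}\in H$. $\mathrm{Pa}^G$, $\mathrm{Anc}^G$, $\mathrm{Desc}^G$ (including the node); $\mathrm{Sc}^G(v)=\mathrm{Anc}^G(v)\cap\mathrm{Desc}^G(v)$ is the strongly connected component of $v$. Induced sub-HEDG on $A$: $(A,E\cap A^2,\{F\in H:F\subseteq A\})$; $A$ ancestral if $\mathrm{Anc}(A)=A$. District of $v$ in a HEDG: $v$ together with all nodes connected to $v$ by a bidirected path $v\leftrightarrow\cdots\leftrightarrow w$. Marginalization $G^{\mathrm{marg}\setminus U}=(V\setminus U,E',H')$: $v_1\to v_2\in E'$ iff a directed path $v_1\to u_1\to\cdots\to u_r\to v_2$ ($r\ge0$, $u_i\in U$) exists; $F'\in H'$ iff there is $F\in H$, $F\subseteq F'\cup U$, with each $v\in F'$ in $F\setminus U$ or reached by a directed path $u_1\to\cdots\to u_r\to v$ ($r\ge1$, $u_i\in U$, $u_1\in F$). Moralization: $v-w$ ($v\ne w$) iff there are $v_1,\dots,v_n$ with $v\in\{v_1\}\cup\mathrm{Pa}(v_1)$, $w\in\{v_n\}\cup\mathrm{Pa}(v_n)$,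 $v_1\leftrightarrow\cdots\leftrightarrow v_n$. $\partial_U(v)$: neighbours in undirected graph $U$. For a total order $<$ on $V$: $\mathrm{Pred}^G_\le(v)=G^{\mathrm{marg}\setminus\{w:w>v\}}$. $<$ is pseudo-topological if $w<v$ for all $v$ and all $w\in\mathrm{Anc}^G(v)\setminus\mathrm{Sc}^G(v)$; a perfect elimination order if for all $v$ and every ancestral sub-HEDG $A$ of $\mathrm{Pred}^G_\le(v)$ with $v\in A$, $\partial_{A^{\mathrm{moral}}}(v)\cup\{v\}$ is complete in $A^{\mathrm{moral}}$; quasi-topological if both. *)

theory Defs
  imports Main
begin

text \<open>A HEDG (V,E,H). An edge (v,w) in E means v \<rightarrow> w.\<close>
record 'a hedg =
  verts :: "'a set"
  edges :: "('a \<times> 'a) set"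
  hyper :: "'a set set"

definition is_hedg :: "'a hedg \<Rightarrow> bool" where
  "is_hedg G \<longleftrightarrow> finite (verts G) \<and> edges G \<subseteq> verts G \<times> verts G
     \<and> (\<forall>F\<in>hyper G. F \<subseteq> verts G)
     \<and> (\<forall>v\<in>verts G. {v} \<in> hyper G)
     \<and> (\<forall>F\<in>hyper G. \<forall>F'. F' \<subseteq> F \<longrightarrow> F' \<in> hyper G)"

definition pa :: "'a hedg \<Rightarrow> 'a \<Rightarrow> 'a set" where
  "pa G v = {w. (w, v) \<in> edges G}"

definition anc :: "'a hedg \<Rightarrow> 'a \<Rightarrow> 'a set" where
  "anc G v = {w \<in> verts G. (w, v) \<in> (edges G)\<^sup>*}"

definition desc :: "'a hedg \<Rightarrow> 'a \<Rightarrow> 'a set" where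
  "desc G v = {w \<in> verts G. (v, w) \<in> (edges G)\<^sup>*}"

definition anc_set :: "'a hedg \<Rightarrow> 'a set \<Rightarrow> 'a set" where
  "anc_set G A = (\<Union>v\<in>A. anc G v)"

definition sc :: "'a hedg \<Rightarrow> 'a \<Rightarrow> 'a set" where
  "sc G v = anc G v \<inter> desc G v"

definition induced :: "'a hedg \<Rightarrow> 'a set \<Rightarrow> 'a hedg" where
  "induced G A = \<lparr>verts = A, edges = edges G \<inter> (A \<times> A), hyper = {F \<in> hyper G. F \<subseteq> A}\<rparr>"

definition ancestral :: "'a hedg \<Rightarrow> 'a set \<Rightarrow> bool" where
  "ancestral G A \<longleftrightarrow> A \<subseteq> verts G \<and> anc_set G A = A"

definition bidir :: "'a hedg \<Rightarrow> ('a \<times> 'a) set" where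
  "bidir G = {(v, w). v \<noteq> w \<and> {v, w} \<in> hyper G}"

definition district :: "'a hedg \<Rightarrow> 'a \<Rightarrow> 'a set" where
  "district G v = {w \<in> verts G. (v, w) \<in> (bidir G)\<^sup>*}"

text \<open>Marginalization of U. Edges ending in U (used for directed paths through U).\<close>
definition edges_into :: "'a hedg \<Rightarrow> 'a set \<Rightarrow> ('a \<times> 'a) set" where
  "edges_into G U = {(a, b) \<in> edges G. b \<in> U}"

definition marg :: "'a hedg \<Rightarrow> 'a set \<Rightarrow> 'a hedg" where
  "marg G U = \<lparr>verts = verts G - U,
     edges = {(v1, v2). v1 \<in> verts G - U \<and> v2 \<in> verts G - U \<and>
                (v1, v2) \<in> (edges_into G U)\<^sup>* O edges G},
     hyper = {F'. F' \<subseteq> verts G - U \<and>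
                (\<exists>F\<in>hyper G. F \<subseteq> F' \<union> U \<and>
                   (\<forall>v\<in>F'. v \<in> F - U \<or>
                      (\<exists>u\<in>F \<inter> U. (u, v) \<in> (edges_into G U)\<^sup>* O edges G)))}\<rparr>"

definition moral_adj :: "'a hedg \<Rightarrow> 'a \<Rightarrow> 'a \<Rightarrow> bool" where
  "moral_adj G v w \<longleftrightarrow> v \<noteq> w \<and>
     (\<exists>v1 vn. v1 \<in> verts G \<and> v \<in> insert v1 (pa G v1) \<and> w \<in> insert vn (pa G vn)
        \<and> (v1, vn) \<in> (bidir G)\<^sup>*)"

definition moral_nbrs :: "'a hedg \<Rightarrow> 'a \<Rightarrow> 'a set" where
  "moral_nbrs G v = {w. moral_adj G v w}"

definition moral_complete :: "'a hedg \<Rightarrow> 'a set \<Rightarrow> bool" where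
  "moral_complete G S \<longleftrightarrow> (\<forall>x\<in>S. \<forall>y\<in>S. x \<noteq> y \<longrightarrow> moral_adj G x y)"

text \<open>Orders: a strict total order R on V, (w,v) \<in> R meaning w < v.\<close>
definition pred_hedg :: "'a hedg \<Rightarrow> ('a \<times> 'a) set \<Rightarrow> 'a \<Rightarrow> 'a hedg" where
  "pred_hedg G R v = marg G {w \<in> verts G. (v, w) \<in> R}"

definition pseudo_topological :: "'a hedg \<Rightarrow> ('a \<times> 'a) set \<Rightarrow> bool" where
  "pseudo_topological G R \<longleftrightarrow>
     (\<forall>v\<in>verts G. \<forall>w\<in>anc G v - sc G v. (w, v) \<in> R)"

definition perfect_elimination :: "'a hedg \<Rightarrow> ('a \<times> 'a) set \<Rightarrow> bool" where
  "perfect_elimination G R \<longleftrightarrow>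
     (\<forall>v\<in>verts G. \<forall>A. ancestral (pred_hedg G R v) A \<and> v \<in> A \<longrightarrow>
        (let M = induced (pred_hedg G R v) A in
           moral_complete M (insert v (moral_nbrs M v))))"

definition quasi_topological :: "'a hedg \<Rightarrow> ('a \<times> 'a) set \<Rightarrow> bool" where
  "quasi_topological G R \<longleftrightarrow> pseudo_topological G R \<and> perfect_elimination G R"

end

theory Submission
  imports Defs
begin

lemma path_lemma:
  assumes EV: "edges G \<subseteq> verts G \<times> verts G" and ab: "(a,b) \<in> (edges G)\<^sup>*" and bU: "b \<notin> U"
  shows "(a \<notin> U \<longrightarrow> (a,b) \<in> (edges (marg G U))\<^sup>*) \<and>
         (a \<in> U \<longrightarrow> (\<exists>z. z \<in> verts G - U \<and> (a,z) \<in> (edges_into G U)\<^sup>* O edges G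
                               \<and> (z,b) \<in> (edges (marg G U))\<^sup>*))"
  using ab
proof (induction rule: converse_rtrancl_induct)
  case base
  then show ?case using bU by simp
next
  case (step a a')
  have aV: "a \<in> verts G" "a' \<in> verts G" using step.hyps(1) EV by auto
  show ?case
  proof (cases "a' \<in> U")
    case False
    have r: "(a,a') \<in> (edges_into G U)\<^sup>* O edges G" using step.hyps(1) by blast
    have "a \<notin> U \<longrightarrow> (a,a') \<in> edges (marg G U)" using r aV False by (simp add: marg_def)
    then show ?thesis using step.IH False aV r
      by (meson Diff_iff converse_rtrancl_into_rtrancl)
  next
    case True
    then obtain z where z: "z \<in> verts G - U" "(a',z) \<in> (edges_into G U)\<^sup>* O edges G"
      "(z,b) \<in> (edges (marg G U))\<^sup>*" using step.IH by blast
    have "(a,a') \<in> edges_into G U" using step.hyps(1) True by (simp add: edges_into_def)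
    then have r: "(a,z) \<in> (edges_into G U)\<^sup>* O edges G" using z(2)
      by (meson converse_rtrancl_into_rtrancl relcomp.simps)
    have "a \<notin> U \<longrightarrow> (a,z) \<in> edges (marg G U)" using r aV z(1) by (simp add: marg_def)
    then show ?thesis using z r by (meson converse_rtrancl_into_rtrancl)
  qed
qed

lemma bidir_sym: "sym (bidir X)"
  unfolding bidir_def sym_def by (auto simp: insert_commute)

lemma bidir_rt_sym: "(a,b) \<in> (bidir X)\<^sup>* \<Longrightarrow> (b,a) \<in> (bidir X)\<^sup>*"
  using sym_rtrancl[OF bidir_sym] by (meson symD)

lemma bidir_closed:
  assumes "(a,b) \<in> (bidir X)\<^sup>*" "a \<in> S" "\<forall>F\<in>hyper X. F \<subseteq> S"
  shows "b \<in> S"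
  using assms(1)
proof (induction rule: rtrancl_induct)
  case base then show ?case using assms(2) by simp
next
  case (step y z) then show ?case using assms(3) by (auto simp: bidir_def)
qed

theorem mainTheorem11:
  fixes G :: "'a hedg" and R :: "('a \<times> 'a) set"
  assumes "is_hedg G"
    and "\<forall>v\<in>verts G. \<exists>w\<in>anc_set G (sc G v).
           sc G v \<subseteq> district (induced G (anc_set G (sc G v))) w"
    and "strict_linear_order_on (verts G) R"
    and "pseudo_topological G R"
  shows "perfect_elimination G R \<and> quasi_topological G R"
proof -
  have EV: "edges G \<subseteq> verts G \<times> verts G" using assms(1) by (simp add: is_hedg_def)
  have tr: "trans R" and irr: "irrefl R" and tot: "total_on (verts G) R"
    using assms(3) by (auto simp: strict_linear_order_on_def)
  have pe: "perfect_elimination G R"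
    unfolding perfect_elimination_def Let_def
  proof (intro ballI allI impI)
    fix v A assume v: "v \<in> verts G" and hA: "ancestral (pred_hedg G R v) A \<and> v \<in> A"
    define U where "U = {w \<in> verts G. (v,w) \<in> R}"
    define P where "P = marg G U"
    have PP: "pred_hedg G R v = P" by (simp add: pred_hedg_def P_def U_def)
    define M where "M = induced P A"
    define EI where "EI = edges_into G U"
    have vU: "v \<notin> U" using irr by (auto simp: U_def irrefl_def)
    have vA: "v \<in> A" using hA by simp
    have AV: "A \<subseteq> verts G - U" using hA PP by (simp add: ancestral_def P_def marg_def)
    have Aanc: "z \<in> A" if "z \<in> verts G - U" "(z,v) \<in> (edges P)\<^sup>*" for z
    proof -
      have "z \<in> anc P v" using that by (simp add: anc_def P_def marg_def)
      then have "z \<in> anc_set P A" using vA by (auto simp: anc_set_def)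
      then show ?thesis using hA PP by (simp add: ancestral_def)
    qed
    have vertsM: "verts M = A" and edgesM: "edges M = edges P \<inter> A \<times> A"
      and hyperM: "hyper M = {F \<in> hyper P. F \<subseteq> A}"
      by (simp_all add: M_def induced_def)
    have ancv: "anc_set G (sc G v) \<subseteq> anc G v"
      by (auto simp: anc_set_def sc_def anc_def)
    define f where "f y = (if y \<in> U then (SOME z. z \<in> verts G - U \<and> (y,z) \<in> EI\<^sup>* O edges G
                                \<and> (z,v) \<in> (edges P)\<^sup>*) else y)" for y
    have fprop: "f y \<in> A \<and> (y \<in> U \<longrightarrow> (y, f y) \<in> EI\<^sup>* O edges G) \<and> (y \<notin> U \<longrightarrow> f y = y)"
      if "y \<in> anc G v" for y
    proof -
      have yv: "(y,v) \<in> (edges G)\<^sup>*" "y \<in> verts G" using that by (auto simp: anc_def)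
      note pl = path_lemma[OF EV yv(1) vU, folded P_def EI_def]
      show ?thesis
      proof (cases "y \<in> U")
        case True
        then obtain z where "z \<in> verts G - U \<and> (y,z) \<in> EI\<^sup>* O edges G \<and> (z,v) \<in> (edges P)\<^sup>*"
          using pl by blast
        then have "f y \<in> verts G - U \<and> (y, f y) \<in> EI\<^sup>* O edges G \<and> (f y,v) \<in> (edges P)\<^sup>*"
          unfolding f_def using True by (simp only: if_True) (rule someI)
        then show ?thesis using Aanc True by blast
      next
        case False
        then show ?thesis using pl Aanc yv(2) by (simp add: f_def)
      qed
    qed
    have fstep: "(f y, f y') \<in> (bidir M)\<^sup>*"
      if "{y,y'} \<in> hyper G" "y \<in> anc G v" "y' \<in> anc G v" for y y'
    proof (cases "f y = f y'")
      case True then show ?thesis by simp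
    next
      case False
      have fy: "f y \<in> A" "f y' \<in> A" using fprop that by auto
      have "{f y, f y'} \<in> hyper P"
      proof -
        have a1: "{f y, f y'} \<subseteq> verts G - U" using fy AV by auto
        have a2: "{y,y'} \<subseteq> {f y, f y'} \<union> U" using fprop[OF that(2)] fprop[OF that(3)]
          by (cases "y \<in> U"; cases "y' \<in> U") auto
        have a3: "\<forall>t\<in>{f y, f y'}. t \<in> {y,y'} - U \<or> (\<exists>u\<in>{y,y'} \<inter> U. (u,t) \<in> EI\<^sup>* O edges G)"
          using fprop[OF that(2)] fprop[OF that(3)] by (cases "y \<in> U"; cases "y' \<in> U") auto
        show ?thesis unfolding P_def marg_def hedg.select_convs mem_Collect_eq
          using a1 a2 a3 that(1) unfolding EI_def by blast
      qed
      then have "(f y, f y') \<in> bidir M" using False fy by (simp add: bidir_def hyperM)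
      then show ?thesis by blast
    qed
    define I where "I = induced G (anc_set G (sc G v))"
    have mapping: "y \<in> anc G v \<and> (v, f y) \<in> (bidir M)\<^sup>*" if "(v,y) \<in> (bidir I)\<^sup>*" for y
      using that
    proof (induction rule: rtrancl_induct)
      case base
      then show ?case using v vU by (simp add: anc_def f_def)
    next
      case (step y z)
      have h: "{y,z} \<in> hyper G" "{y,z} \<subseteq> anc_set G (sc G v)"
        using step.hyps(2) by (auto simp: bidir_def I_def induced_def)
      then have "z \<in> anc G v" using ancv by auto
      then show ?case using step.IH fstep[OF h(1)] by (meson rtrancl_trans)
    qed
    have key: "(v,c) \<in> (bidir M)\<^sup>*" if "c \<in> A" "(v,c) \<in> edges M" for c
    proof (cases "c = v")
      case True then show ?thesis by simp
    next
      case False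
      have cV: "c \<in> verts G" "c \<notin> U" using that AV by auto
      have "(v,c) \<in> EI\<^sup>* O edges G" using that edgesM by (simp add: P_def marg_def EI_def)
      moreover have "EI\<^sup>* \<subseteq> (edges G)\<^sup>*" unfolding EI_def edges_into_def
        by (rule rtrancl_mono) blast
      ultimately have vc: "(v,c) \<in> (edges G)\<^sup>*" by (auto intro: rtrancl_into_rtrancl)
      have cv: "(c,v) \<in> R" using tot cV v False by (auto simp: total_on_def U_def)
      have "c \<in> anc G v"
      proof (rule ccontr)
        assume "c \<notin> anc G v"
        then have "v \<in> anc G c - sc G c" using vc v cV by (auto simp: anc_def sc_def desc_def)
        then have "(v,c) \<in> R" using assms(4) cV by (auto simp: pseudo_topological_def)
        then show False using cv tr irr by (meson irrefl_def transD)
      qed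
      then have csc: "c \<in> sc G v" using vc cV by (simp add: sc_def desc_def)
      have vsc: "v \<in> sc G v" using v by (simp add: sc_def anc_def desc_def)
      obtain w where "sc G v \<subseteq> district I w" using assms(2) v I_def by blast
      then have "(w,v) \<in> (bidir I)\<^sup>*" "(w,c) \<in> (bidir I)\<^sup>*" using csc vsc by (auto simp: district_def)
      then have "(v,c) \<in> (bidir I)\<^sup>*" by (meson bidir_rt_sym rtrancl_trans)
      then have "(v, f c) \<in> (bidir M)\<^sup>*" using mapping by blast
      then show ?thesis using cV by (simp add: f_def)
    qed
    have nb: "\<exists>u\<in>A. z \<in> insert u (pa M u) \<and> (v,u) \<in> (bidir M)\<^sup>*"
      if "z \<in> insert v (moral_nbrs M v)" for z
    proof (cases "z = v")
      case True then show ?thesis using vA by blast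
    next
      case False
      then have "moral_adj M v z" using that by (simp add: moral_nbrs_def)
      then obtain v1 vn where o: "v1 \<in> A" "v \<in> insert v1 (pa M v1)" "z \<in> insert vn (pa M vn)"
        "(v1,vn) \<in> (bidir M)\<^sup>*" by (auto simp: moral_adj_def vertsM)
      have "(v,v1) \<in> (bidir M)\<^sup>*"
        using o(2) key[OF o(1)] by (auto simp: pa_def)
      moreover have "vn \<in> A" using bidir_closed[OF o(4) o(1)] hyperM by auto
      ultimately show ?thesis using o by (meson rtrancl_trans)
    qed
    have "moral_complete M (insert v (moral_nbrs M v))"
      unfolding moral_complete_def
    proof (intro ballI impI)
      fix x y assume "x \<in> insert v (moral_nbrs M v)" "y \<in> insert v (moral_nbrs M v)" "x \<noteq> y"
      obtain ux uy where "ux \<in> A" "x \<in> insert ux (pa M ux)" "(v,ux) \<in> (bidir M)\<^sup>*"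
        "uy \<in> A" "y \<in> insert uy (pa M uy)" "(v,uy) \<in> (bidir M)\<^sup>*"
        using nb \<open>x \<in> _\<close> \<open>y \<in> _\<close> by meson
      moreover then have "(ux,uy) \<in> (bidir M)\<^sup>*" by (meson bidir_rt_sym rtrancl_trans)
      ultimately show "moral_adj M x y" using \<open>x \<noteq> y\<close> by (auto simp: moral_adj_def vertsM)
    qed
    then show "moral_complete (induced (pred_hedg G R v) A) (insert v (moral_nbrs (induced (pred_hedg G R v) A) v))"
      using PP M_def by simp
  qed
  then show ?thesis using assms(4) by (simp add: quasi_topological_def)
qed

end
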